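(* Let $K,T\subset\mathbb{R}^n$ be convex bodies. (1) If $q=(q_1,\dots,q_m)$ is a closed strong $(K,T)$-Minkowski billiard trajectory with respect to the $K$-supporting hyperplanes $H_1,\dots,H_m$, then $q$ is a closed weak $(K,T)$-Minkowski billiard trajectory fulfilling the weak Minkowski billiard reflection rule with respect to $H_1,\dots,H_m$. (2) If in addition $T$ is strictly convex, and $q=(q_1,\dots,q_m)$ is a closed weak $(K,T)$-Minkowski billiard trajectory fulfilling the weak Minkowski billiard reflection rule with respect to $K$-supporting hyperplanes $H_1,\dots,H_m$, then $q$ is a closed strong $(K,T)$-Minkowski billiard trajectory with respect to $H_1,\dots,H_m$.
   Context: A convex body in $\mathbb{R}^n$ is a compact convex set containing the origin in its interior. For a convex body $T$, $T^\circ=\{x:\langle x,y\rangle\le 1\ \forall y\in T\}$ is its polar body and $\mu_{T^\circ}(x)=\min\{t\ge 0: x\in tT^\circ\}$ is the Minkowski functional of $T^\circ$ (it equals the support function $h_T(x)=\max_{y\in T}\langle x,y\rangle$). For a convex set $C$ and $z\in\partial C$, $N_C(z)=\{v:\langle v,y-z\rangle\le 0\ \forall y\in C\}$ is the outer normal cone. A closed polygonal curve with vertices $q_1,\dots,q_m$ ($m\ge 2$), written $(q_1,\dots,q_m)$, is always assumed to satisfy $q_j\ne q_{j+1}$ and $q_j\notin[q_{j-1},q_{j+1}]$ for all $j$, indices taken mod $m$. Its $\ell_T$-length is $\ell_T(q)=\sum_{j=1}^m\mu_{T^\circ}(q_{j+1}-q_j)$. Weak trajectories: a closed polygonal curve $q=(q_1,\dots,q_m)$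 with vertices on $\partial K$ is a closed weak $(K,T)$-Minkowski billiard trajectory if for each $j$ there is a supporting hyperplane $H_j$ of $K$ through $q_j$ such that $q_j$ minimizes $\bar q\mapsto \mu_{T^\circ}(\bar q-q_{j-1})+\mu_{T^\circ}(q_{j+1}-\bar q)$ over all $\bar q\in H_j$; one says $q$ fulfills the weak Minkowski billiard reflection rule with respect to $H_1,\dots,H_m$. Strong trajectories: a closed polygonal curve $q=(q_1,\dots,q_m)$ with vertices on $\partial K$ is a closed strong $(K,T)$-Minkowski billiard trajectory if there are $p_1,\dots,p_m\in\partial T$ with $q_{j+1}-q_j\in N_T(p_j)$ and $p_{j+1}-p_j\in -N_K(q_{j+1})$ for all $j$ (indices mod $m$); $p=(p_1,\dots,p_m)$ is called a closed dual billiard trajectory in $T$. It is a strong trajectory with respect to the $K$-supporting hyperplanes $H_1,\dots,H_m$ through $q_1,\dots,q_m$ if there are outer unit normal vectors $n_K(q_j)\in N_K(q_j)$ with $n_K(q_j)$ normal to $H_j$ and numbers $\mu_j\ge 0$ such that $p_{j+1}-p_j=-\mu_{j+1}n_K(q_{j+1})$ for all $j$. *)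

theory Defs
  imports "HOL-Analysis.Analysis"
begin

definition convex_body :: "'a::euclidean_space set \<Rightarrow> bool" where
  "convex_body C \<longleftrightarrow> compact C \<and> convex C \<and> 0 \<in> interior C"

definition polar_body :: "'a::euclidean_space set \<Rightarrow> 'a set" where
  "polar_body T = {x. \<forall>y\<in>T. x \<bullet> y \<le> 1}"

definition minkowski_functional :: "'a::euclidean_space set \<Rightarrow> 'a \<Rightarrow> real" where
  "minkowski_functional C x = Inf {t. t \<ge> 0 \<and> x \<in> (\<lambda>y. t *\<^sub>R y) ` C}"

definition muT :: "'a::euclidean_space set \<Rightarrow> 'a \<Rightarrow> real" where
  "muT T x = minkowski_functional (polar_body T) x"

definition normal_cone :: "'a::euclidean_space set \<Rightarrow> 'a \<Rightarrow> 'a set" where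
  "normal_cone C z = {v. \<forall>y\<in>C. v \<bullet> (y - z) \<le> 0}"

definition strictly_convex_set :: "'a::euclidean_space set \<Rightarrow> bool" where
  "strictly_convex_set C \<longleftrightarrow> convex C \<and>
     (\<forall>x\<in>C. \<forall>y\<in>C. x \<noteq> y \<longrightarrow> (\<forall>t. 0 < t \<and> t < 1 \<longrightarrow> (1 - t) *\<^sub>R x + t *\<^sub>R y \<in> interior C))"

definition supporting_hyperplane :: "'a::euclidean_space set \<Rightarrow> 'a set \<Rightarrow> 'a \<Rightarrow> bool" where
  "supporting_hyperplane K H z \<longleftrightarrow>
     (\<exists>u c. u \<noteq> 0 \<and> H = {x. u \<bullet> x = c} \<and> z \<in> H \<and> (\<forall>y\<in>K. u \<bullet> y \<le> c))"

definition closed_polygon :: "(nat \<Rightarrow> 'a::euclidean_space) \<Rightarrow> nat \<Rightarrow> bool" where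
  "closed_polygon q m \<longleftrightarrow> m \<ge> 2 \<and>
     (\<forall>j<m. q j \<noteq> q ((j + 1) mod m) \<and>
            q j \<notin> closed_segment (q ((j + m - 1) mod m)) (q ((j + 1) mod m)))"

definition weak_traj_wrt ::
  "'a::euclidean_space set \<Rightarrow> 'a set \<Rightarrow> (nat \<Rightarrow> 'a) \<Rightarrow> nat \<Rightarrow> (nat \<Rightarrow> 'a set) \<Rightarrow> bool" where
  "weak_traj_wrt K T q m H \<longleftrightarrow> closed_polygon q m \<and>
     (\<forall>j<m. q j \<in> frontier K \<and> supporting_hyperplane K (H j) (q j) \<and>
        (\<forall>qb\<in>H j. muT T (q j - q ((j + m - 1) mod m)) + muT T (q ((j + 1) mod m) - q j)
                 \<le> muT T (qb - q ((j + m - 1) mod m)) + muT T (q ((j + 1) mod m) - qb)))"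

definition strong_traj_wrt ::
  "'a::euclidean_space set \<Rightarrow> 'a set \<Rightarrow> (nat \<Rightarrow> 'a) \<Rightarrow> nat \<Rightarrow> (nat \<Rightarrow> 'a set) \<Rightarrow> bool" where
  "strong_traj_wrt K T q m H \<longleftrightarrow> closed_polygon q m \<and>
     (\<forall>j<m. q j \<in> frontier K \<and> supporting_hyperplane K (H j) (q j)) \<and>
     (\<exists>p nK mu. \<forall>j<m.
        p j \<in> frontier T \<and>
        q ((j + 1) mod m) - q j \<in> normal_cone T (p j) \<and>
        p ((j + 1) mod m) - p j \<in> uminus ` normal_cone K (q ((j + 1) mod m)) \<and>
        nK j \<in> normal_cone K (q j) \<and> norm (nK j) = 1 \<and>
        (\<forall>x\<in>H j. \<forall>y\<in>H j. nK j \<bullet> (x - y) = 0) \<and>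
        mu j \<ge> (0::real) \<and>
        p ((j + 1) mod m) - p j = - (mu ((j + 1) mod m) *\<^sub>R nK ((j + 1) mod m)))"

end

theory Submission
  imports Defs
begin


lemma muT_max:
  fixes T :: "'a::euclidean_space set"
  assumes cb: "convex_body T" and pT: "p \<in> T" and mx: "\<forall>y\<in>T. x \<bullet> y \<le> x \<bullet> p"
  shows "muT T x = x \<bullet> p"
proof -
  define S where "S = {t. t \<ge> 0 \<and> x \<in> (\<lambda>y. t *\<^sub>R y) ` polar_body T}"
  have lb: "x \<bullet> p \<le> t" if "t \<in> S" for t
  proof -
    from that obtain z where z: "z \<in> polar_body T" "x = t *\<^sub>R z" and t: "t \<ge> 0"
      unfolding S_def by auto
    have "z \<bullet> p \<le> 1" using z(1) pT unfolding polar_body_def by auto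
    then have "t * (z \<bullet> p) \<le> t * 1" using t by (rule mult_left_mono)
    then show ?thesis using z(2) by simp
  qed
  have int0: "0 \<in> interior T" using cb unfolding convex_body_def by auto
  then have "0 \<in> T" using interior_subset by blast
  then have nn: "x \<bullet> p \<ge> 0" using mx by force
  have mem: "x \<bullet> p \<in> S"
  proof (cases "x \<bullet> p = 0")
    case True
    have "x = 0"
    proof (rule ccontr)
      assume xn: "x \<noteq> 0"
      obtain e where e: "e > 0" "ball 0 e \<subseteq> T" using int0 mem_interior by blast
      define y where "y = (e / (2 * norm x)) *\<^sub>R x"
      have "norm y = e / 2" using xn e unfolding y_def by simp
      then have "y \<in> T" using e by auto
      moreover have "x \<bullet> y = e / (2 * norm x) * (norm x)^2"
        unfolding y_def by (simp add: power2_norm_eq_inner)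
      moreover have "e / (2 * norm x) * (norm x)^2 > 0" using xn e by simp
      ultimately show False using mx True by force
    qed
    moreover have "(0::'a) \<in> polar_body T" unfolding polar_body_def by simp
    ultimately show ?thesis unfolding S_def using True by force
  next
    case False
    then have pos: "x \<bullet> p > 0" using nn by simp
    define z where "z = (1 / (x \<bullet> p)) *\<^sub>R x"
    have "z \<in> polar_body T" unfolding polar_body_def z_def
      using mx pos by (auto simp: divide_simps)
    moreover have "x = (x \<bullet> p) *\<^sub>R z" unfolding z_def using pos by simp
    ultimately show ?thesis unfolding S_def using nn by blast
  qed
  have "Inf S = x \<bullet> p" by (rule cInf_eq_minimum[OF mem lb])
  then show ?thesis unfolding muT_def minkowski_functional_def S_def by simp
qed

lemma argmax_ex:
  fixes T :: "'a::euclidean_space set"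
  assumes cb: "convex_body T"
  shows "\<exists>p\<in>T. \<forall>y\<in>T. x \<bullet> y \<le> x \<bullet> p"
proof -
  have "compact T" "T \<noteq> {}" using cb interior_subset unfolding convex_body_def by auto
  moreover have "continuous_on T (\<lambda>y. x \<bullet> y)" by (intro continuous_intros)
  ultimately show ?thesis by (rule continuous_attains_sup)
qed

lemma muT_ge:
  fixes T :: "'a::euclidean_space set"
  assumes cb: "convex_body T" and "y \<in> T"
  shows "x \<bullet> y \<le> muT T x"
proof -
  obtain p where "p \<in> T" "\<forall>y\<in>T. x \<bullet> y \<le> x \<bullet> p" using argmax_ex[OF cb] by blast
  then show ?thesis using muT_max[OF cb] assms(2) by force
qed

lemma normal_cone_iff: "v \<in> normal_cone T p \<longleftrightarrow> (\<forall>y\<in>T. v \<bullet> y \<le> v \<bullet> p)"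
  unfolding normal_cone_def by (simp add: inner_diff_right)

lemma interior_not_max:
  fixes T :: "'a::euclidean_space set"
  assumes "p \<in> interior T" "v \<noteq> 0"
  shows "\<exists>y\<in>T. v \<bullet> y > v \<bullet> p"
proof -
  obtain e where e: "e > 0" "ball p e \<subseteq> T" using assms(1) mem_interior by blast
  define y where "y = p + (e / (2 * norm v)) *\<^sub>R v"
  have "dist p y = e / 2" using assms(2) e unfolding y_def dist_norm by simp
  then have "y \<in> T" using e by auto
  moreover have "v \<bullet> y = v \<bullet> p + e / (2 * norm v) * (norm v)^2"
    unfolding y_def by (simp add: power2_norm_eq_inner inner_add_right)
  moreover have "e / (2 * norm v) * (norm v)^2 > 0" using assms(2) e by simp
  ultimately show ?thesis by force
qed

lemma max_frontier:
  fixes T :: "'a::euclidean_space set"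
  assumes "closed T" "p \<in> T" "v \<noteq> 0" "\<forall>y\<in>T. v \<bullet> y \<le> v \<bullet> p"
  shows "p \<in> frontier T"
  using interior_not_max[of p T v] assms unfolding frontier_def
  by (auto simp: closure_closed not_le[symmetric])

lemma max_unique:
  fixes T :: "'a::euclidean_space set"
  assumes sc: "strictly_convex_set T" and v: "v \<noteq> 0"
    and p1: "p1 \<in> T" "\<forall>y\<in>T. v \<bullet> y \<le> v \<bullet> p1"
    and p2: "p2 \<in> T" "\<forall>y\<in>T. v \<bullet> y \<le> v \<bullet> p2"
  shows "p1 = p2"
proof (rule ccontr)
  assume ne: "p1 \<noteq> p2"
  define z where "z = (1 - 1/2) *\<^sub>R p1 + (1/2::real) *\<^sub>R p2"
  have "z \<in> interior T" using sc ne p1(1) p2(1) unfolding strictly_convex_set_def z_def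
    by (metis field_sum_of_halves half_gt_zero_iff less_add_same_cancel1 zero_less_one)
  then obtain y where y: "y \<in> T" "v \<bullet> y > v \<bullet> z" using interior_not_max v by blast
  have "v \<bullet> p1 = v \<bullet> p2" using p1 p2 by force
  then have "v \<bullet> z = v \<bullet> p1" unfolding z_def by (simp add: inner_add_right)
  then show False using y p1 by force
qed


lemma limit_max:
  fixes T :: "'a::euclidean_space set"
  assumes cb: "convex_body T" and sc: "strictly_convex_set T"
    and v: "v \<noteq> 0" and v': "v' \<noteq> 0"
    and P1: "P1 \<in> T" "\<forall>y\<in>T. v \<bullet> y \<le> v \<bullet> P1"
    and P2: "P2 \<in> T" "\<forall>y\<in>T. v' \<bullet> y \<le> v' \<bullet> P2"
    and H: "\<forall>t>0. \<exists>X Y. X \<in> T \<and> Y \<in> T \<and> (\<forall>y\<in>T. (v + t *\<^sub>R w) \<bullet> y \<le> (v + t *\<^sub>R w) \<bullet> X)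
              \<and> (\<forall>y\<in>T. (v' - t *\<^sub>R w) \<bullet> y \<le> (v' - t *\<^sub>R w) \<bullet> Y) \<and> w \<bullet> (X - Y) \<ge> 0"
  shows "w \<bullet> (P1 - P2) \<ge> 0"
proof -
  define t where "t k = 1 / real (Suc k)" for k
  have tpos: "t k > 0" for k unfolding t_def by simp
  have "\<forall>k. \<exists>xy. xy \<in> T \<times> T \<and> (\<forall>y\<in>T. (v + t k *\<^sub>R w) \<bullet> y \<le> (v + t k *\<^sub>R w) \<bullet> fst xy)
              \<and> (\<forall>y\<in>T. (v' - t k *\<^sub>R w) \<bullet> y \<le> (v' - t k *\<^sub>R w) \<bullet> snd xy) \<and> w \<bullet> (fst xy - snd xy) \<ge> 0"
    using H tpos by fastforce
  then obtain f where f: "\<And>k. f k \<in> T \<times> T"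
      "\<And>k. \<forall>y\<in>T. (v + t k *\<^sub>R w) \<bullet> y \<le> (v + t k *\<^sub>R w) \<bullet> fst (f k)"
      "\<And>k. \<forall>y\<in>T. (v' - t k *\<^sub>R w) \<bullet> y \<le> (v' - t k *\<^sub>R w) \<bullet> snd (f k)"
      "\<And>k. w \<bullet> (fst (f k) - snd (f k)) \<ge> 0"
    by metis
  have "compact T" using cb unfolding convex_body_def by auto
  then have "seq_compact (T \<times> T)" using compact_Times compact_imp_seq_compact by blast
  then obtain l r where l: "l \<in> T \<times> T" and r: "strict_mono r" and lim: "(f \<circ> r) \<longlonglongrightarrow> l"
    unfolding seq_compact_def using f(1) by meson
  have t0: "t \<longlonglongrightarrow> 0" unfolding t_def by (rule LIMSEQ_inverse_real_of_nat[unfolded inverse_eq_divide])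
  then have s0: "(\<lambda>n. t (r n)) \<longlonglongrightarrow> 0" using LIMSEQ_subseq_LIMSEQ[OF t0 r] by (simp add: o_def)
  have l1: "(\<lambda>n. fst (f (r n))) \<longlonglongrightarrow> fst l" using tendsto_fst[OF lim] by (simp add: o_def)
  have l2: "(\<lambda>n. snd (f (r n))) \<longlonglongrightarrow> snd l" using tendsto_snd[OF lim] by (simp add: o_def)
  have m1: "v \<bullet> y \<le> v \<bullet> fst l" if "y \<in> T" for y
  proof (rule LIMSEQ_le)
    show "(\<lambda>n. (v + t (r n) *\<^sub>R w) \<bullet> y) \<longlonglongrightarrow> v \<bullet> y"
      using tendsto_inner[OF tendsto_add[OF tendsto_const tendsto_scaleR[OF s0 tendsto_const]] tendsto_const]
      by simp
    show "(\<lambda>n. (v + t (r n) *\<^sub>R w) \<bullet> fst (f (r n))) \<longlonglongrightarrow> v \<bullet> fst l"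
      using tendsto_inner[OF tendsto_add[OF tendsto_const tendsto_scaleR[OF s0 tendsto_const]] l1]
      by simp
    show "\<exists>N. \<forall>n\<ge>N. (v + t (r n) *\<^sub>R w) \<bullet> y \<le> (v + t (r n) *\<^sub>R w) \<bullet> fst (f (r n))"
      using f(2) that by blast
  qed
  have m2: "v' \<bullet> y \<le> v' \<bullet> snd l" if "y \<in> T" for y
  proof (rule LIMSEQ_le)
    show "(\<lambda>n. (v' - t (r n) *\<^sub>R w) \<bullet> y) \<longlonglongrightarrow> v' \<bullet> y"
      using tendsto_inner[OF tendsto_diff[OF tendsto_const tendsto_scaleR[OF s0 tendsto_const]] tendsto_const]
      by simp
    show "(\<lambda>n. (v' - t (r n) *\<^sub>R w) \<bullet> snd (f (r n))) \<longlonglongrightarrow> v' \<bullet> snd l"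
      using tendsto_inner[OF tendsto_diff[OF tendsto_const tendsto_scaleR[OF s0 tendsto_const]] l2]
      by simp
    show "\<exists>N. \<forall>n\<ge>N. (v' - t (r n) *\<^sub>R w) \<bullet> y \<le> (v' - t (r n) *\<^sub>R w) \<bullet> snd (f (r n))"
      using f(3) that by blast
  qed
  have e1: "fst l = P1" using max_unique[OF sc v _ _ P1] l m1 by auto
  have e2: "snd l = P2" using max_unique[OF sc v' _ _ P2] l m2 by auto
  have "0 \<le> w \<bullet> (fst l - snd l)"
  proof (rule LIMSEQ_le)
    show "(\<lambda>n. 0::real) \<longlonglongrightarrow> 0" by simp
    show "(\<lambda>n. w \<bullet> (fst (f (r n)) - snd (f (r n)))) \<longlonglongrightarrow> w \<bullet> (fst l - snd l)"
      by (intro tendsto_inner tendsto_diff tendsto_const l1 l2)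
    show "\<exists>N. \<forall>n\<ge>N. 0 \<le> w \<bullet> (fst (f (r n)) - snd (f (r n)))" using f(4) by blast
  qed
  then show ?thesis using e1 e2 by simp
qed


lemma vertex:
  fixes T :: "'a::euclidean_space set"
  assumes cb: "convex_body T" and sc: "strictly_convex_set T"
    and u: "u \<noteq> 0" and ua: "u \<bullet> a \<le> c" and ub: "u \<bullet> b \<le> c" and uz: "u \<bullet> z = c"
    and za: "z \<noteq> a" and bz: "b \<noteq> z"
    and wk: "\<forall>qb. u \<bullet> qb = c \<longrightarrow> muT T (z - a) + muT T (b - z) \<le> muT T (qb - a) + muT T (b - qb)"
    and P1: "P1 \<in> T" "\<forall>y\<in>T. (z - a) \<bullet> y \<le> (z - a) \<bullet> P1"
    and P2: "P2 \<in> T" "\<forall>y\<in>T. (b - z) \<bullet> y \<le> (b - z) \<bullet> P2"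
  shows "\<exists>l\<ge>0. P1 - P2 = l *\<^sub>R u"
proof -
  have v: "z - a \<noteq> 0" and v': "b - z \<noteq> 0" using za bz by auto
  have A: "w \<bullet> (P1 - P2) \<ge> 0" if uw: "u \<bullet> w = 0" for w
  proof (rule limit_max[OF cb sc v v' P1 P2], intro allI impI)
    fix t :: real assume t: "t > 0"
    obtain X where X: "X \<in> T" "\<forall>y\<in>T. (z - a + t *\<^sub>R w) \<bullet> y \<le> (z - a + t *\<^sub>R w) \<bullet> X"
      using argmax_ex[OF cb] by blast
    obtain Y where Y: "Y \<in> T" "\<forall>y\<in>T. (b - z - t *\<^sub>R w) \<bullet> y \<le> (b - z - t *\<^sub>R w) \<bullet> Y"
      using argmax_ex[OF cb] by blast
    define qb where "qb = z + t *\<^sub>R w"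
    have "u \<bullet> qb = c" unfolding qb_def using uz uw by (simp add: inner_add_right)
    then have ineq: "muT T (z - a) + muT T (b - z) \<le> muT T (qb - a) + muT T (b - qb)" using wk by blast
    have q1: "qb - a = z - a + t *\<^sub>R w" and q2: "b - qb = b - z - t *\<^sub>R w" unfolding qb_def by (simp_all add: algebra_simps)
    have e: "muT T (qb - a) = (z - a + t *\<^sub>R w) \<bullet> X" "muT T (b - qb) = (b - z - t *\<^sub>R w) \<bullet> Y"
      unfolding q1 q2 using muT_max[OF cb X(1) X(2)] muT_max[OF cb Y(1) Y(2)] by simp_all
    have "(z - a) \<bullet> X \<le> muT T (z - a)" "(b - z) \<bullet> Y \<le> muT T (b - z)"
      using muT_ge[OF cb X(1)] muT_ge[OF cb Y(1)] by auto
    then have "0 \<le> t * (w \<bullet> X - w \<bullet> Y)" using ineq e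
      by (simp add: inner_add_left inner_diff_left algebra_simps)
    then have "w \<bullet> (X - Y) \<ge> 0" using t by (simp add: zero_le_mult_iff inner_diff_right)
    then show "\<exists>X Y. X \<in> T \<and> Y \<in> T \<and> (\<forall>y\<in>T. (z - a + t *\<^sub>R w) \<bullet> y \<le> (z - a + t *\<^sub>R w) \<bullet> X) \<and>
          (\<forall>y\<in>T. (b - z - t *\<^sub>R w) \<bullet> y \<le> (b - z - t *\<^sub>R w) \<bullet> Y) \<and> 0 \<le> w \<bullet> (X - Y)"
      using X Y by blast
  qed
  define d where "d = P1 - P2"
  define l where "l = (d \<bullet> u) / (u \<bullet> u)"
  define w where "w = d - l *\<^sub>R u"
  have uu: "u \<bullet> u \<noteq> 0" using u by simp
  have uw: "u \<bullet> w = 0" unfolding w_def l_def using uu by (simp add: inner_diff_right inner_commute)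
  have "w \<bullet> d \<ge> 0" using A[OF uw] unfolding d_def .
  moreover have "(- w) \<bullet> d \<ge> 0" using A[of "- w"] uw unfolding d_def by simp
  ultimately have "w \<bullet> d = 0" by simp
  moreover have "w \<bullet> d = w \<bullet> w"
  proof -
    have "w \<bullet> d = w \<bullet> (w + l *\<^sub>R u)" unfolding w_def by simp
    also have "\<dots> = w \<bullet> w" using uw by (simp add: inner_add_right inner_commute)
    finally show ?thesis .
  qed
  ultimately have "w = 0" by simp
  then have dl: "d = l *\<^sub>R u" unfolding w_def by simp
  have "l \<ge> 0"
  proof (rule ccontr)
    assume ln: "\<not> l \<ge> 0"
    have "(z - a) \<bullet> d \<ge> 0" using P1 P2 unfolding d_def by (simp add: inner_diff_right)
    then have "l * (u \<bullet> (z - a)) \<ge> 0" using dl by (simp add: inner_commute)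
    moreover have "u \<bullet> (z - a) \<ge> 0" using ua uz by (simp add: inner_diff_right)
    ultimately have "u \<bullet> (z - a) = 0" using ln by (simp add: mult_le_0_iff zero_le_mult_iff)
    then have uac: "u \<bullet> a = c" using uz by (simp add: inner_diff_right)
    have "(b - z) \<bullet> d \<le> 0" using P1 P2 unfolding d_def by (simp add: inner_diff_right)
    then have "l * (u \<bullet> (b - z)) \<le> 0" using dl by (simp add: inner_commute)
    moreover have "u \<bullet> (b - z) \<le> 0" using ub uz by (simp add: inner_diff_right)
    ultimately have "u \<bullet> (b - z) = 0" using ln by (simp add: mult_le_0_iff zero_le_mult_iff)
    have ineq: "muT T (z - a) + muT T (b - z) \<le> muT T (a - a) + muT T (b - a)" using wk uac by blast
    have m0: "muT T (a - a) = 0" using muT_max[OF cb P1(1), of 0] by simp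
    obtain P where P: "P \<in> T" "\<forall>y\<in>T. (b - a) \<bullet> y \<le> (b - a) \<bullet> P" using argmax_ex[OF cb] by blast
    have mba: "muT T (b - a) = (z - a) \<bullet> P + (b - z) \<bullet> P"
      using muT_max[OF cb P] by (simp add: inner_diff_left)
    have m1: "muT T (z - a) = (z - a) \<bullet> P1" using muT_max[OF cb P1] .
    have m2: "muT T (b - z) = (b - z) \<bullet> P2" using muT_max[OF cb P2] .
    have g1: "(z - a) \<bullet> P \<le> (z - a) \<bullet> P1" using P1 P by blast
    have g2: "(b - z) \<bullet> P \<le> (b - z) \<bullet> P2" using P2 P by blast
    have "(z - a) \<bullet> P = (z - a) \<bullet> P1" using ineq m0 mba m1 m2 g1 g2 by linarith
    then have "P = P1" using max_unique[OF sc v P(1) _ P1] P1 by (metis)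
    have "(b - z) \<bullet> P = (b - z) \<bullet> P2" using ineq m0 mba m1 m2 g1 g2 by linarith
    then have "P = P2" using max_unique[OF sc v' P(1) _ P2] P2 by (metis)
    have "d = 0" unfolding d_def using \<open>P = P1\<close> \<open>P = P2\<close> by simp
    then have "l = 0" using dl u by simp
    then show False using ln by simp
  qed
  then show ?thesis using dl unfolding d_def by blast
qed


lemma idx1: "(j::nat) < m \<Longrightarrow> ((j + m - 1) mod m + 1) mod m = j"
proof -
  assume j: "j < m"
  have "((j + m - 1) mod m + 1) mod m = (j + m - 1 + 1) mod m" by (rule mod_add_left_eq)
  also have "j + m - 1 + 1 = j + m" using j by simp
  finally show ?thesis using j by simp
qed

lemma idx2: "(k::nat) < m \<Longrightarrow> ((k + 1) mod m + m - 1) mod m = k"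
proof -
  assume k: "k < m"
  have "(k + 1) mod m + m - 1 = (k + 1) mod m + (m - 1)" using k by linarith
  then have "((k + 1) mod m + m - 1) mod m = (k + 1 + (m - 1)) mod m" by (simp only: mod_add_left_eq)
  also have "k + 1 + (m - 1) = k + m" using k by simp
  finally show ?thesis using k by simp
qed

lemma part1:
  fixes K T :: "'a::euclidean_space set" and q :: "nat \<Rightarrow> 'a" and m :: nat
    and H :: "nat \<Rightarrow> 'a set"
  assumes cb: "convex_body T" and st: "strong_traj_wrt K T q m H"
  shows "weak_traj_wrt K T q m H"
proof -
  have cl: "closed T" using cb unfolding convex_body_def by (simp add: compact_imp_closed)
  have cp: "closed_polygon q m" and fs: "\<forall>j<m. q j \<in> frontier K \<and> supporting_hyperplane K (H j) (q j)"
    using st unfolding strong_traj_wrt_def by auto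
  obtain p nK mu where S: "\<forall>j<m.
        p j \<in> frontier T \<and>
        q ((j + 1) mod m) - q j \<in> normal_cone T (p j) \<and>
        p ((j + 1) mod m) - p j \<in> uminus ` normal_cone K (q ((j + 1) mod m)) \<and>
        nK j \<in> normal_cone K (q j) \<and> norm (nK j) = 1 \<and>
        (\<forall>x\<in>H j. \<forall>y\<in>H j. nK j \<bullet> (x - y) = 0) \<and>
        mu j \<ge> (0::real) \<and>
        p ((j + 1) mod m) - p j = - (mu ((j + 1) mod m) *\<^sub>R nK ((j + 1) mod m))"
    using st unfolding strong_traj_wrt_def by blast
  have m0: "m > 0" using cp unfolding closed_polygon_def by simp
  have "\<forall>qb\<in>H j. muT T (q j - q ((j + m - 1) mod m)) + muT T (q ((j + 1) mod m) - q j)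
                 \<le> muT T (qb - q ((j + m - 1) mod m)) + muT T (q ((j + 1) mod m) - qb)"
    if j: "j < m" for j
  proof
    fix qb assume qb: "qb \<in> H j"
    define i where "i = (j + m - 1) mod m"
    define k where "k = (j + 1) mod m"
    have i: "i < m" unfolding i_def using m0 by simp
    have ij: "(i + 1) mod m = j" unfolding i_def using idx1[OF j] .
    from S i ij have Si: "p i \<in> frontier T" "q j - q i \<in> normal_cone T (p i)"
      "p j - p i = - (mu j *\<^sub>R nK j)" by auto
    from S j have Sj: "p j \<in> frontier T" "q k - q j \<in> normal_cone T (p j)"
      "\<forall>x\<in>H j. \<forall>y\<in>H j. nK j \<bullet> (x - y) = 0" unfolding k_def by auto
    have pi: "p i \<in> T" and pj: "p j \<in> T" using Si(1) Sj(1) frontier_subset_closed[OF cl] by auto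
    have qjH: "q j \<in> H j" using fs j unfolding supporting_hyperplane_def by auto
    have h1: "muT T (q j - q i) = (q j - q i) \<bullet> p i"
      using muT_max[OF cb pi] Si(2) normal_cone_iff by blast
    have h2: "muT T (q k - q j) = (q k - q j) \<bullet> p j"
      using muT_max[OF cb pj] Sj(2) normal_cone_iff by blast
    have g1: "(qb - q i) \<bullet> p i \<le> muT T (qb - q i)" using muT_ge[OF cb pi] .
    have g2: "(q k - qb) \<bullet> p j \<le> muT T (q k - qb)" using muT_ge[OF cb pj] .
    have o: "nK j \<bullet> (qb - q j) = 0" using Sj(3) qb qjH by blast
    have "p i = p j + mu j *\<^sub>R nK j" using Si(3) by (simp add: algebra_simps)
    then have "(qb - q j) \<bullet> p i = (qb - q j) \<bullet> p j"
      using o by (simp add: inner_add_right inner_commute)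
    then have "(q j - q i) \<bullet> p i + (q k - q j) \<bullet> p j \<le> (qb - q i) \<bullet> p i + (q k - qb) \<bullet> p j"
      by (simp add: inner_diff_left algebra_simps)
    then show "muT T (q j - q i) + muT T (q k - q j) \<le> muT T (qb - q i) + muT T (q k - qb)"
      using h1 h2 g1 g2 by linarith
  qed
  then show ?thesis unfolding weak_traj_wrt_def using cp fs by blast
qed


lemma part2:
  fixes K T :: "'a::euclidean_space set" and q :: "nat \<Rightarrow> 'a" and m :: nat
    and H :: "nat \<Rightarrow> 'a set"
  assumes cbK: "convex_body K" and cb: "convex_body T" and sc: "strictly_convex_set T" and wt: "weak_traj_wrt K T q m H"
  shows "strong_traj_wrt K T q m H"
proof -
  have cl: "closed T" using cb unfolding convex_body_def by (simp add: compact_imp_closed)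
  have cp: "closed_polygon q m" and fs: "\<forall>j<m. q j \<in> frontier K \<and> supporting_hyperplane K (H j) (q j)"
    and W: "\<forall>j<m. \<forall>qb\<in>H j. muT T (q j - q ((j + m - 1) mod m)) + muT T (q ((j + 1) mod m) - q j)
                 \<le> muT T (qb - q ((j + m - 1) mod m)) + muT T (q ((j + 1) mod m) - qb)"
    using wt unfolding weak_traj_wrt_def by auto
  have m0: "m > 0" using cp unfolding closed_polygon_def by simp
  have cpj: "q j \<noteq> q ((j + 1) mod m)" if "j < m" for j
    using cp that unfolding closed_polygon_def by auto
  have "\<forall>j. \<exists>u c. j < m \<longrightarrow> (u \<noteq> 0 \<and> H j = {x. u \<bullet> x = c} \<and> q j \<in> H j \<and> (\<forall>y\<in>K. u \<bullet> y \<le> c))"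
    using fs unfolding supporting_hyperplane_def by metis
  then obtain u c where uc: "\<And>j. j < m \<Longrightarrow> u j \<noteq> 0 \<and> H j = {x. u j \<bullet> x = c j} \<and> q j \<in> H j \<and> (\<forall>y\<in>K. u j \<bullet> y \<le> c j)"
    by metis
  define P where "P j = (SOME p. p \<in> T \<and> (\<forall>y\<in>T. (q ((j + 1) mod m) - q j) \<bullet> y \<le> (q ((j + 1) mod m) - q j) \<bullet> p))" for j
  have PP: "P j \<in> T \<and> (\<forall>y\<in>T. (q ((j + 1) mod m) - q j) \<bullet> y \<le> (q ((j + 1) mod m) - q j) \<bullet> P j)" for j
    unfolding P_def by (rule someI_ex) (use argmax_ex[OF cb] in blast)
  have "\<forall>k. \<exists>l. k < m \<longrightarrow> (l \<ge> 0 \<and> P ((k + m - 1) mod m) - P k = l *\<^sub>R u k)"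
  proof (intro allI)
    fix k show "\<exists>l. k < m \<longrightarrow> (l \<ge> 0 \<and> P ((k + m - 1) mod m) - P k = l *\<^sub>R u k)"
    proof (cases "k < m")
      case True
      define i where "i = (k + m - 1) mod m"
      have i: "i < m" unfolding i_def using m0 by simp
      have ik: "(i + 1) mod m = k" unfolding i_def using idx1[OF True] .
      have uk: "u k \<noteq> 0" "H k = {x. u k \<bullet> x = c k}" "q k \<in> H k" "\<forall>y\<in>K. u k \<bullet> y \<le> c k"
        using uc[OF True] by auto
      have clK: "closed K" using cbK unfolding convex_body_def by (simp add: compact_imp_closed)
      have qK: "q j \<in> K" if "j < m" for j
        using fs that frontier_subset_closed[OF clK] by blast
      have kk: "(k + 1) mod m < m" using m0 by simp
      have ua: "u k \<bullet> q i \<le> c k" using uk(4) qK[OF i] by blast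
      have ub: "u k \<bullet> q ((k + 1) mod m) \<le> c k" using uk(4) qK[OF kk] by blast
      have uz: "u k \<bullet> q k = c k" using uk(2,3) by blast
      have za: "q k \<noteq> q i" using cpj[OF i] ik by metis
      have bz: "q ((k + 1) mod m) \<noteq> q k" using cpj[OF True] by metis
      have wk: "\<forall>qb. u k \<bullet> qb = c k \<longrightarrow> muT T (q k - q i) + muT T (q ((k + 1) mod m) - q k)
           \<le> muT T (qb - q i) + muT T (q ((k + 1) mod m) - qb)"
        using W True uk(2) unfolding i_def by blast
      have P1: "P i \<in> T" "\<forall>y\<in>T. (q k - q i) \<bullet> y \<le> (q k - q i) \<bullet> P i"
        using PP[of i] ik by auto
      have P2: "P k \<in> T" "\<forall>y\<in>T. (q ((k + 1) mod m) - q k) \<bullet> y \<le> (q ((k + 1) mod m) - q k) \<bullet> P k"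
        using PP[of k] by auto
      show ?thesis using vertex[OF cb sc uk(1) ua ub uz za bz wk P1 P2] unfolding i_def by blast
    qed simp
  qed
  then obtain L where L: "\<And>k. k < m \<Longrightarrow> L k \<ge> 0 \<and> P ((k + m - 1) mod m) - P k = L k *\<^sub>R u k"
    by metis
  define nK where "nK j = (1 / norm (u j)) *\<^sub>R u j" for j
  define mu where "mu j = L j * norm (u j)" for j
  have clK: "closed K" using cbK unfolding convex_body_def by (simp add: compact_imp_closed)
  have qK: "q j \<in> K" if "j < m" for j
    using fs that frontier_subset_closed[OF clK] by blast
  have ncu: "a *\<^sub>R u j \<in> normal_cone K (q j)" if "j < m" "a \<ge> 0" for j a
  proof -
    have "\<forall>y\<in>K. u j \<bullet> y \<le> u j \<bullet> q j" using uc[OF that(1)] by auto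
    then show ?thesis unfolding normal_cone_iff using that(2)
      by (simp add: mult_left_mono)
  qed
  have "\<forall>j<m.
        P j \<in> frontier T \<and>
        q ((j + 1) mod m) - q j \<in> normal_cone T (P j) \<and>
        P ((j + 1) mod m) - P j \<in> uminus ` normal_cone K (q ((j + 1) mod m)) \<and>
        nK j \<in> normal_cone K (q j) \<and> norm (nK j) = 1 \<and>
        (\<forall>x\<in>H j. \<forall>y\<in>H j. nK j \<bullet> (x - y) = 0) \<and>
        mu j \<ge> (0::real) \<and>
        P ((j + 1) mod m) - P j = - (mu ((j + 1) mod m) *\<^sub>R nK ((j + 1) mod m))"
  proof (intro allI impI conjI)
    fix j assume j: "j < m"
    define k where "k = (j + 1) mod m"
    have k: "k < m" unfolding k_def using m0 by simp
    have kj: "(k + m - 1) mod m = j" unfolding k_def using idx2[OF j] .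
    have v: "q k - q j \<noteq> 0" using cpj[OF j] unfolding k_def by simp
    have uj: "u j \<noteq> 0" "H j = {x. u j \<bullet> x = c j}" using uc[OF j] by auto
    have uk: "u k \<noteq> 0" using uc[OF k] by auto
    show "P j \<in> frontier T" using max_frontier[OF cl _ v] PP[of j] unfolding k_def by blast
    show "q ((j + 1) mod m) - q j \<in> normal_cone T (P j)" using PP[of j] normal_cone_iff by blast
    have Lk: "L k \<ge> 0" "P j - P k = L k *\<^sub>R u k" using L[OF k] kj by auto
    have eq: "mu k *\<^sub>R nK k = L k *\<^sub>R u k" unfolding mu_def nK_def using uk by simp
    show "P ((j + 1) mod m) - P j = - (mu ((j + 1) mod m) *\<^sub>R nK ((j + 1) mod m))"
      using Lk(2) eq unfolding k_def[symmetric] by (simp add: algebra_simps)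
    then show "P ((j + 1) mod m) - P j \<in> uminus ` normal_cone K (q ((j + 1) mod m))"
      using ncu[OF k Lk(1)] eq unfolding k_def[symmetric] by auto
    have "nK j = (1 / norm (u j)) *\<^sub>R u j" by (simp add: nK_def)
    then show "nK j \<in> normal_cone K (q j)" using ncu[OF j, of "1 / norm (u j)"] by simp
    show "norm (nK j) = 1" unfolding nK_def using uj by simp
    show "\<forall>x\<in>H j. \<forall>y\<in>H j. nK j \<bullet> (x - y) = 0"
      unfolding nK_def uj(2) by (simp add: inner_diff_right)
    show "mu j \<ge> 0" unfolding mu_def using L[OF j] by simp
  qed
  then show ?thesis unfolding strong_traj_wrt_def using cp fs by blast
qed


theorem theorem1p1:
  fixes K T :: "'a::euclidean_space set" and q :: "nat \<Rightarrow> 'a" and m :: nat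
    and H :: "nat \<Rightarrow> 'a set"
  assumes "convex_body K" and "convex_body T"
  shows "(strong_traj_wrt K T q m H \<longrightarrow> weak_traj_wrt K T q m H) \<and>
         (strictly_convex_set T \<longrightarrow> weak_traj_wrt K T q m H \<longrightarrow> strong_traj_wrt K T q m H)"
  using part1[OF assms(2)] part2[OF assms] by blast

end
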